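(* Let $p,q$ be positive integers with $2\le p/q<4$, let $G$ be a graph and $f$ a $(p,q)$-colouring of $G$, and let $f'$ be the $(p,q)$-colouring obtained from $f$ by recolouring a vertex set $X$ by $1$ (i.e. $f'(v)\equiv f(v)+1\pmod p$ for $v\in X$, $f'(v)=f(v)$ otherwise, and $f'$ is assumed to be a $(p,q)$-colouring). Then $f'$ can be obtained from $f$ by a sequence of recolourings of single vertices, in which every intermediate map is a $(p,q)$-colouring, if and only if the induced subdigraph $D_f[X]$ contains no directed cycle.
   Context: A $(p,q)$-colouring of $G$ is a map $f:V(G)\to\{0,\dots,p-1\}$ with $q\le|f(u)-f(v)|\le p-q$ for every edge $uv$. $D_f$ is the digraph on $V(G)$ with an arc $\overrightarrow{xy}$ whenever $xy\in E(G)$ and $f(y)-f(x)\equiv q\pmod p$ (so when $p=2q$ every edge of $G$ gives arcs in both directions, i.e. a directed 2-cycle). Directed cycles include directed 2-cycles. *)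

theory Defs
  imports Main
begin

definition graph :: "'a set \<Rightarrow> ('a \<Rightarrow> 'a \<Rightarrow> bool) \<Rightarrow> bool" where
  "graph V E \<longleftrightarrow> finite V \<and> (\<forall>u v. E u v \<longrightarrow> u \<in> V \<and> v \<in> V)
     \<and> (\<forall>u v. E u v \<longrightarrow> E v u) \<and> (\<forall>v. \<not> E v v)"

definition pq_colouring :: "nat \<Rightarrow> nat \<Rightarrow> 'a set \<Rightarrow> ('a \<Rightarrow> 'a \<Rightarrow> bool) \<Rightarrow> ('a \<Rightarrow> nat) \<Rightarrow> bool" where
  "pq_colouring p q V E f \<longleftrightarrow> (\<forall>v\<in>V. f v < p) \<and>
     (\<forall>u v. E u v \<longrightarrow> int q \<le> \<bar>int (f u) - int (f v)\<bar> \<and> \<bar>int (f u) - int (f v)\<bar> \<le> int p - int q)"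

definition Df_arc :: "nat \<Rightarrow> nat \<Rightarrow> ('a \<Rightarrow> 'a \<Rightarrow> bool) \<Rightarrow> ('a \<Rightarrow> nat) \<Rightarrow> 'a \<Rightarrow> 'a \<Rightarrow> bool" where
  "Df_arc p q E f x y \<longleftrightarrow> E x y \<and> (int (f y) - int (f x)) mod int p = int q mod int p"

definition has_dicycle_in :: "nat \<Rightarrow> nat \<Rightarrow> ('a \<Rightarrow> 'a \<Rightarrow> bool) \<Rightarrow> ('a \<Rightarrow> nat) \<Rightarrow> 'a set \<Rightarrow> bool" where
  "has_dicycle_in p q E f X \<longleftrightarrow> (\<exists>cs. length cs \<ge> 2 \<and> distinct cs \<and> set cs \<subseteq> X \<and>
      (\<forall>i < length cs - 1. Df_arc p q E f (cs ! i) (cs ! Suc i)) \<and>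
      Df_arc p q E f (last cs) (hd cs))"

definition reconfigurable :: "nat \<Rightarrow> nat \<Rightarrow> 'a set \<Rightarrow> ('a \<Rightarrow> 'a \<Rightarrow> bool) \<Rightarrow> ('a \<Rightarrow> nat) \<Rightarrow> ('a \<Rightarrow> nat) \<Rightarrow> bool" where
  "reconfigurable p q V E f g \<longleftrightarrow> (\<exists>fs. fs \<noteq> [] \<and>
      (\<forall>v\<in>V. hd fs v = f v) \<and> (\<forall>v\<in>V. last fs v = g v) \<and>
      (\<forall>h\<in>set fs. pq_colouring p q V E h) \<and>
      (\<forall>i < length fs - 1. \<exists>u\<in>V. \<forall>v\<in>V - {u}. (fs ! i) v = (fs ! Suc i) v))"

end

theory Submission imports Defs "HOL-Library.Transitive_Closure_Table" begin
lemma arc_iff: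
  fixes a b p q :: nat
  assumes "a < p" "b < p" "0 < q" "q < p"
  shows "((int b - int a) mod int p = int q mod int p) \<longleftrightarrow> (int b - int a = int q \<or> int b - int a = int q - int p)"
proof -
  have qq: "int q mod int p = int q" using assms by simp
  show ?thesis
  proof
    assume h: "(int b - int a) mod int p = int q mod int p"
    show "int b - int a = int q \<or> int b - int a = int q - int p"
    proof (cases "int b - int a \<ge> 0")
      case True
      then have "(int b - int a) mod int p = int b - int a" using assms by (intro mod_pos_pos_trivial) auto
      then show ?thesis using h qq by simp
    next
      case False
      have "(int b - int a) mod int p = (int b - int a + int p) mod int p" by simp
      also have "\<dots> = int b - int a + int p" using assms False by (intro mod_pos_pos_trivial) auto
      finally show ?thesis using h qq by simp
    qed
  next
    assume "int b - int a = int q \<or> int b - int a = int q - int p"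
    then show "(int b - int a) mod int p = int q mod int p"
    proof
      assume "int b - int a = int q - int p"
      then have "(int b - int a) mod int p = (int q + (-1) * int p) mod int p" by simp
      then show ?thesis by (metis mod_mult_self1)
    qed simp
  qed
qed

lemma frozen_arith:
  fixes a b z c p q :: nat
  assumes "0 < q" "2*q \<le> p" "p < 4*q" "a < p" "b < p" "z < p" "c < p"
    "int b - int a = int q \<or> int b - int a = int q - int p"
    "int a - int z = int q \<or> int a - int z = int q - int p"
    "int q \<le> \<bar>int c - int b\<bar>" "\<bar>int c - int b\<bar> \<le> int p - int q"
    "int q \<le> \<bar>int z - int c\<bar>" "\<bar>int z - int c\<bar> \<le> int p - int q"
  shows "c = a"
  using assms by (auto simp: abs_if split: if_splits)

lemma step_arith:
  fixes a b p q :: nat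
  assumes "0 < q" "2*q \<le> p" "a < p" "b < p"
    "int q \<le> \<bar>int a - int b\<bar>" "\<bar>int a - int b\<bar> \<le> int p - int q"
    "\<not> (int b - int a = int q \<or> int b - int a = int q - int p)"
  shows "int q \<le> \<bar>int ((a+1) mod p) - int b\<bar> \<and> \<bar>int ((a+1) mod p) - int b\<bar> \<le> int p - int q"
proof (cases "a + 1 < p")
  case True
  then have e: "int ((a+1) mod p) = int a + 1" by simp
  show ?thesis unfolding e using assms by arith
next
  case False
  then have "a + 1 = p" using assms by simp
  then have "(a+1) mod p = 0" by simp
  then show ?thesis using assms \<open>a+1 = p\<close> by simp
qed

definition hS :: "nat \<Rightarrow> ('a \<Rightarrow> nat) \<Rightarrow> 'a set \<Rightarrow> 'a \<Rightarrow> nat" where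
  "hS p f S = (\<lambda>v. if v \<in> S then (f v + 1) mod p else f v)"

lemma hS_col:
  assumes q0: "0 < q" and pq: "2*q \<le> p" and G: "graph V E" and fc: "pq_colouring p q V E f"
    and SX: "S \<subseteq> X" and XV: "X \<subseteq> V" and f'c: "pq_colouring p q V E (hS p f X)"
    and cl: "\<forall>x\<in>S. \<forall>y\<in>X. Df_arc p q E f x y \<longrightarrow> y \<in> S"
  shows "pq_colouring p q V E (hS p f S)"
proof -
  have Ev: "\<And>u v. E u v \<Longrightarrow> u \<in> V \<and> v \<in> V" and Es: "\<And>u v. E u v \<Longrightarrow> E v u"
    using G unfolding graph_def by auto
  have fl: "\<And>v. v \<in> V \<Longrightarrow> f v < p" and fe: "\<And>u v. E u v \<Longrightarrow> int q \<le> \<bar>int (f u) - int (f v)\<bar> \<and> \<bar>int (f u) - int (f v)\<bar> \<le> int p - int q"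
    using fc unfolding pq_colouring_def by auto
  have f'e: "\<And>u v. E u v \<Longrightarrow> int q \<le> \<bar>int (hS p f X u) - int (hS p f X v)\<bar> \<and> \<bar>int (hS p f X u) - int (hS p f X v)\<bar> \<le> int p - int q"
    using f'c unfolding pq_colouring_def by auto
  have one: "int q \<le> \<bar>int ((f u + 1) mod p) - int (f v)\<bar> \<and> \<bar>int ((f u + 1) mod p) - int (f v)\<bar> \<le> int p - int q"
    if e: "E u v" and u: "u \<in> S" and v: "v \<notin> S" for u v
  proof (cases "v \<in> X")
    case True
    have na: "\<not> Df_arc p q E f u v" using cl u True v by auto
    have "\<not> (int (f v) - int (f u) = int q \<or> int (f v) - int (f u) = int q - int p)"
      using na e arc_iff[of "f u" p "f v" q] fl Ev[OF e] q0 pq unfolding Df_arc_def by auto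
    then show ?thesis using step_arith[of q p "f u" "f v"] q0 pq fl Ev[OF e] fe[OF e] by auto
  next
    case False
    then show ?thesis using f'e[OF e] u SX unfolding hS_def by auto
  qed
  show ?thesis unfolding pq_colouring_def
  proof (intro conjI allI ballI impI)
    fix v assume "v \<in> V" then show "hS p f S v < p" using fl q0 pq unfolding hS_def by auto
  next
    fix u v assume e: "E u v"
    have "(u \<in> S \<and> v \<in> S) \<or> (u \<notin> S \<and> v \<notin> S) \<or> (u \<in> S \<and> v \<notin> S) \<or> (u \<notin> S \<and> v \<in> S)" by blast
    then have "int q \<le> \<bar>int (hS p f S u) - int (hS p f S v)\<bar> \<and> \<bar>int (hS p f S u) - int (hS p f S v)\<bar> \<le> int p - int q"
    proof (elim disjE)
      assume h: "u \<in> S \<and> v \<in> S"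
      then have "u \<in> X" "v \<in> X" using SX by auto
      then show ?thesis using f'e[OF e] h unfolding hS_def by simp
    next
      assume "u \<notin> S \<and> v \<notin> S" then show ?thesis using fe[OF e] unfolding hS_def by auto
    next
      assume "u \<in> S \<and> v \<notin> S" then show ?thesis using one[OF e] unfolding hS_def by auto
    next
      assume h: "u \<notin> S \<and> v \<in> S" then show ?thesis using one[OF Es[OF e]] unfolding hS_def
        by (auto simp: abs_minus_commute)
    qed
    then show "int q \<le> \<bar>int (hS p f S u) - int (hS p f S v)\<bar>" "\<bar>int (hS p f S u) - int (hS p f S v)\<bar> \<le> int p - int q" by auto
  qed
qed

lemma frozen:
  assumes q0: "0 < q" and pq: "2*q \<le> p" and p4: "p < 4*q" and G: "graph V E"
    and CV: "C \<subseteq> V"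
    and cyc: "\<forall>x\<in>C. \<exists>y\<in>C. \<exists>z\<in>C. Df_arc p q E f x y \<and> Df_arc p q E f z x"
    and fl: "\<forall>v\<in>V. f v < p"
    and ne: "hs \<noteq> []" and hd: "\<forall>v\<in>V. hd hs v = f v"
    and col: "\<forall>h\<in>set hs. pq_colouring p q V E h"
    and st: "\<forall>i < length hs - 1. \<exists>u\<in>V. \<forall>v\<in>V - {u}. (hs ! i) v = (hs ! Suc i) v"
  shows "i < length hs \<Longrightarrow> \<forall>x\<in>C. (hs ! i) x = f x"
proof (induction i)
  case 0
  then show ?case using hd CV ne by (auto simp: hd_conv_nth)
next
  case (Suc i)
  then have IH: "\<forall>x\<in>C. (hs ! i) x = f x" by simp
  have "i < length hs - 1" using Suc.prems by simp
  then obtain u where u: "u \<in> V" "\<forall>v\<in>V - {u}. (hs ! i) v = (hs ! Suc i) v" using st by blast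
  have Ev: "\<And>u v. E u v \<Longrightarrow> u \<in> V \<and> v \<in> V" and irr: "\<And>v. \<not> E v v"
    using G unfolding graph_def by auto
  have hc: "pq_colouring p q V E (hs ! Suc i)" using col Suc.prems by auto
  show ?case
  proof
    fix x assume x: "x \<in> C"
    show "(hs ! Suc i) x = f x"
    proof (cases "x = u")
      case False
      then show ?thesis using u IH x CV by force
    next
      case True
      obtain y z where y: "y \<in> C" and z: "z \<in> C" and axy: "Df_arc p q E f x y" and azx: "Df_arc p q E f z x"
        using cyc x by blast
      have "E x y" "E z x" using axy azx unfolding Df_arc_def by auto
      then have "y \<noteq> x" "z \<noteq> x" using irr by auto
      then have hy: "(hs ! Suc i) y = f y" and hz: "(hs ! Suc i) z = f z" using u IH y z CV True by force+
      have lt: "f x < p" "f y < p" "f z < p" "(hs ! Suc i) x < p" using fl CV x y z hc unfolding pq_colouring_def by auto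
      have d1: "int (f y) - int (f x) = int q \<or> int (f y) - int (f x) = int q - int p"
        using arc_iff[of "f x" p "f y" q] lt axy q0 pq unfolding Df_arc_def by auto
      have d2: "int (f x) - int (f z) = int q \<or> int (f x) - int (f z) = int q - int p"
        using arc_iff[of "f z" p "f x" q] lt azx q0 pq unfolding Df_arc_def by auto
      have e1: "int q \<le> \<bar>int ((hs ! Suc i) x) - int (f y)\<bar> \<and> \<bar>int ((hs ! Suc i) x) - int (f y)\<bar> \<le> int p - int q"
        using hc \<open>E x y\<close> hy unfolding pq_colouring_def by metis
      have e2: "int q \<le> \<bar>int (f z) - int ((hs ! Suc i) x)\<bar> \<and> \<bar>int (f z) - int ((hs ! Suc i) x)\<bar> \<le> int p - int q"
        using hc \<open>E z x\<close> hz unfolding pq_colouring_def by metis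
      show ?thesis using frozen_arith[of q p "f x" "f y" "f z" "(hs ! Suc i) x"] q0 pq p4 lt d1 d2 e1 e2 by auto
    qed
  qed
qed
lemma cycle_of_not_acyclic:
  assumes irr: "\<forall>v. \<not> E v v"
    and na: "\<not> acyclic {(x,y). x\<in>X \<and> y\<in>X \<and> Df_arc p q E f x y}"
  shows "has_dicycle_in p q E f X"
proof -
  define r where "r = {(x,y). x\<in>X \<and> y\<in>X \<and> Df_arc p q E f x y}"
  define R where "R = (\<lambda>a b. (a,b) \<in> r)"
  obtain x where "(x,x) \<in> r\<^sup>+" using na unfolding acyclic_def r_def by blast
  from tranclD[OF this] obtain y where xy: "(x,y) \<in> r" and yx: "(y,x) \<in> r\<^sup>*" by blast
  have "R\<^sup>*\<^sup>* y x" using yx unfolding R_def by (simp add: rtranclp_rtrancl_eq)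
  then obtain ys where "rtrancl_path R y ys x" unfolding rtranclp_eq_rtrancl_path by blast
  then obtain ys' where p: "rtrancl_path R y ys' x" and d: "distinct (y # ys')"
    by (rule rtrancl_path_distinct)
  have ne: "ys' \<noteq> []"
  proof
    assume "ys' = []"
    then have "rtrancl_path R y [] x" using p by simp
    then have "y = x" by (cases rule: rtrancl_path.cases) auto
    then show False using xy irr unfolding Df_arc_def r_def by auto
  qed
  have lx: "last ys' = x" using rtrancl_path_last[OF p ne] .
  have "y \<in> X" using xy unfolding r_def by auto
  moreover have "set ys' \<subseteq> X" using rtrancl_path_Range[OF p] unfolding R_def r_def by blast
  moreover have "\<forall>i < length (y # ys') - 1. Df_arc p q E f ((y#ys') ! i) ((y#ys') ! Suc i)"
  proof (intro allI impI)
    fix i assume "i < length (y # ys') - 1"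
    then have "i < length ys'" by simp
    from rtrancl_path_nth[OF p this] show "Df_arc p q E f ((y#ys') ! i) ((y#ys') ! Suc i)" unfolding R_def r_def by simp
  qed
  moreover have "Df_arc p q E f (last (y#ys')) (hd (y#ys'))" using lx ne xy unfolding r_def by auto
  moreover have "length (y # ys') \<ge> 2" using ne by (cases ys') auto
  ultimately have "set (y # ys') \<subseteq> X" "\<forall>i < length (y # ys') - 1. Df_arc p q E f ((y#ys') ! i) ((y#ys') ! Suc i)"
     "Df_arc p q E f (last (y#ys')) (hd (y#ys'))" "length (y # ys') \<ge> 2" by simp_all
  then show ?thesis unfolding has_dicycle_in_def using d by blast
qed

lemma build:
  assumes q0: "0 < q" and pq: "2*q \<le> p" and G: "graph V E" and fc: "pq_colouring p q V E f"
    and XV: "X \<subseteq> V" and f'c: "pq_colouring p q V E (hS p f X)"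
    and wfr: "wf {(x,y). x\<in>X \<and> y\<in>X \<and> Df_arc p q E f x y}"
  shows "finite S \<Longrightarrow> S \<subseteq> X \<Longrightarrow> \<forall>x\<in>S. \<forall>y\<in>X. Df_arc p q E f x y \<longrightarrow> y \<in> S
     \<Longrightarrow> reconfigurable p q V E f (hS p f S)"
proof (induction "card S" arbitrary: S)
  case 0
  then have "S = {}" by simp
  then have "hS p f S = f" unfolding hS_def by auto
  then show ?case unfolding reconfigurable_def using fc by (intro exI[of _ "[f]"]) auto
next
  case (Suc n)
  let ?r = "{(x,y). x\<in>X \<and> y\<in>X \<and> Df_arc p q E f x y}"
  from Suc.hyps(2) have "S \<noteq> {}" by auto
  then obtain z where z: "z \<in> S" and zmin: "\<forall>y. (y,z) \<in> ?r \<longrightarrow> y \<notin> S"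
    using wfr unfolding wf_eq_minimal by blast
  let ?S = "S - {z}"
  have cS: "card ?S = n" using Suc.hyps(2) z Suc.prems(1) by simp
  have clS: "\<forall>x\<in>?S. \<forall>y\<in>X. Df_arc p q E f x y \<longrightarrow> y \<in> ?S"
  proof (intro ballI impI)
    fix x y assume x: "x \<in> ?S" and y: "y \<in> X" and a: "Df_arc p q E f x y"
    have "y \<in> S" using Suc.prems(3) x y a by auto
    moreover have "y \<noteq> z" using zmin x a y Suc.prems(2) by auto
    ultimately show "y \<in> ?S" by simp
  qed
  have "finite ?S" "?S \<subseteq> X" using Suc.prems(1,2) by auto
  then have "reconfigurable p q V E f (hS p f ?S)"
    using Suc.hyps(1)[OF cS[symmetric]] clS by blast
  then obtain fs where ne: "fs \<noteq> []" and hd: "\<forall>v\<in>V. hd fs v = f v"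
    and la: "\<forall>v\<in>V. last fs v = hS p f ?S v" and col: "\<forall>h\<in>set fs. pq_colouring p q V E h"
    and st: "\<forall>i < length fs - 1. \<exists>u\<in>V. \<forall>v\<in>V - {u}. (fs ! i) v = (fs ! Suc i) v"
    unfolding reconfigurable_def by blast
  have newc: "pq_colouring p q V E (hS p f S)"
    using hS_col[OF q0 pq G fc Suc.prems(2) XV f'c Suc.prems(3)] .
  let ?fs = "fs @ [hS p f S]"
  have st2: "\<forall>i < length ?fs - 1. \<exists>u\<in>V. \<forall>v\<in>V - {u}. (?fs ! i) v = (?fs ! Suc i) v"
  proof (intro allI impI)
    fix i assume i: "i < length ?fs - 1"
    show "\<exists>u\<in>V. \<forall>v\<in>V - {u}. (?fs ! i) v = (?fs ! Suc i) v"
    proof (cases "i < length fs - 1")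
      case True
      then show ?thesis using st by (auto simp: nth_append)
    next
      case False
      then have ie: "i = length fs - 1" using i by simp
      then have e1: "?fs ! i = last fs" using ne by (simp add: nth_append last_conv_nth)
      have e2: "?fs ! Suc i = hS p f S" using ie ne by (simp add: nth_append)
      have "z \<in> V" using z Suc.prems(2) XV by auto
      moreover have "\<forall>v\<in>V - {z}. (?fs ! i) v = (?fs ! Suc i) v"
        unfolding e1 e2 using la unfolding hS_def by auto
      ultimately show ?thesis by blast
    qed
  qed
  have "?fs \<noteq> []" by simp
  moreover have "\<forall>v\<in>V. hd ?fs v = f v" using hd ne by simp
  moreover have "\<forall>v\<in>V. last ?fs v = hS p f S v" by simp
  moreover have "\<forall>h\<in>set ?fs. pq_colouring p q V E h" using col newc by simp
  ultimately show ?case unfolding reconfigurable_def using st2 by blast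
qed

theorem lemma2p7:
  fixes p q :: nat and V :: "'a set" and E :: "'a \<Rightarrow> 'a \<Rightarrow> bool"
    and f :: "'a \<Rightarrow> nat" and X :: "'a set"
  assumes "0 < q" and "2 * q \<le> p" and "p < 4 * q"
    and "graph V E"
    and "pq_colouring p q V E f"
    and "X \<subseteq> V"
    and "pq_colouring p q V E (\<lambda>v. if v \<in> X then (f v + 1) mod p else f v)"
  shows "reconfigurable p q V E f (\<lambda>v. if v \<in> X then (f v + 1) mod p else f v)
           \<longleftrightarrow> \<not> has_dicycle_in p q E f X"
proof -
  note q0 = assms(1) and pq = assms(2) and p4 = assms(3) and G = assms(4) and fc = assms(5)
    and XV = assms(6)
  have geq: "(\<lambda>v. if v \<in> X then (f v + 1) mod p else f v) = hS p f X" unfolding hS_def ..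
  have f'c: "pq_colouring p q V E (hS p f X)" using assms(7) unfolding geq .
  have fl: "\<forall>v\<in>V. f v < p" using fc unfolding pq_colouring_def by blast
  have irr: "\<forall>v. \<not> E v v" and finV: "finite V" using G unfolding graph_def by auto
  show ?thesis unfolding geq
  proof
    assume rc: "reconfigurable p q V E f (hS p f X)"
    show "\<not> has_dicycle_in p q E f X"
    proof
      assume "has_dicycle_in p q E f X"
      then obtain cs where len: "length cs \<ge> 2" and cX: "set cs \<subseteq> X"
        and arcs: "\<forall>i < length cs - 1. Df_arc p q E f (cs ! i) (cs ! Suc i)"
        and la: "Df_arc p q E f (last cs) (hd cs)"
        unfolding has_dicycle_in_def by blast
      have cne: "cs \<noteq> []" using len by auto
      have cyc: "\<forall>x\<in>set cs. \<exists>y\<in>set cs. \<exists>z\<in>set cs. Df_arc p q E f x y \<and> Df_arc p q E f z x"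
      proof
        fix x assume "x \<in> set cs"
        then obtain j where j: "j < length cs" and xj: "x = cs ! j" by (auto simp: in_set_conv_nth)
        have "\<exists>y\<in>set cs. Df_arc p q E f x y"
        proof (cases "Suc j < length cs")
          case True
          then show ?thesis using arcs xj by (intro bexI[of _ "cs ! Suc j"]) auto
        next
          case False
          then have "j = length cs - 1" using j by simp
          then have "x = last cs" using xj cne by (simp add: last_conv_nth)
          then show ?thesis using la cne by (intro bexI[of _ "hd cs"]) auto
        qed
        moreover have "\<exists>z\<in>set cs. Df_arc p q E f z x"
        proof (cases "j > 0")
          case True
          then have "j - 1 < length cs - 1" "Suc (j - 1) = j" using j by auto
          then have "Df_arc p q E f (cs ! (j-1)) (cs ! Suc (j-1))" using arcs by blast
          then have "Df_arc p q E f (cs ! (j-1)) x" using xj \<open>Suc (j - 1) = j\<close> by simp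
          then show ?thesis using j by (intro bexI[of _ "cs ! (j-1)"]) auto
        next
          case False
          then have "x = hd cs" using xj cne by (simp add: hd_conv_nth)
          then show ?thesis using la cne by (intro bexI[of _ "last cs"]) auto
        qed
        ultimately show "\<exists>y\<in>set cs. \<exists>z\<in>set cs. Df_arc p q E f x y \<and> Df_arc p q E f z x" by blast
      qed
      obtain fs where ne: "fs \<noteq> []" and hd: "\<forall>v\<in>V. hd fs v = f v"
        and lst: "\<forall>v\<in>V. last fs v = hS p f X v" and col: "\<forall>h\<in>set fs. pq_colouring p q V E h"
        and st: "\<forall>i < length fs - 1. \<exists>u\<in>V. \<forall>v\<in>V - {u}. (fs ! i) v = (fs ! Suc i) v"
        using rc unfolding reconfigurable_def by blast
      have CV: "set cs \<subseteq> V" using cX XV by auto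
      have "length fs - 1 < length fs" using ne by simp
      from frozen[OF q0 pq p4 G CV cyc fl ne hd col st this]
      have "\<forall>x\<in>set cs. (fs ! (length fs - 1)) x = f x" .
      then have "last fs (hd cs) = f (hd cs)" using ne cne by (simp add: last_conv_nth)
      moreover have "hd cs \<in> X" using cX cne by auto
      ultimately have eq: "(f (hd cs) + 1) mod p = f (hd cs)" using lst XV unfolding hS_def by auto
      have "f (hd cs) < p" using fl \<open>hd cs \<in> X\<close> XV by auto
      show False
      proof (cases "f (hd cs) + 1 < p")
        case True
        then have "(f (hd cs) + 1) mod p = f (hd cs) + 1" by simp
        then show False using eq by simp
      next
        case False
        then have "f (hd cs) + 1 = p" using \<open>f (hd cs) < p\<close> by simp
        then have "(f (hd cs) + 1) mod p = 0" by simp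
        then show False using eq \<open>f (hd cs) + 1 = p\<close> q0 pq by simp
      qed
    qed
  next
    assume nd: "\<not> has_dicycle_in p q E f X"
    let ?r = "{(x,y). x\<in>X \<and> y\<in>X \<and> Df_arc p q E f x y}"
    have ac: "acyclic ?r" using cycle_of_not_acyclic[of E X p q f, OF irr] nd by blast
    have finX: "finite X" using finV XV finite_subset by blast
    have "?r \<subseteq> X \<times> X" by auto
    then have "finite ?r" using finX finite_subset by blast
    then have wfr: "wf ?r" using ac finite_acyclic_wf by blast
    show "reconfigurable p q V E f (hS p f X)"
      using build[OF q0 pq G fc XV f'c wfr finX] by blast
  qed
qed

end
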